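(* For every integer $n\ge 0$, the nanostar dendrimer $D_3[n]$ satisfies $$SO(D_3[n])=(63\cdot 2^n-30)\sqrt{2}+(18\cdot 2^n-12)\sqrt{13}.$$
   Context: For a finite simple graph $G$, $SO(G)=\sum_{uv\in E(G)}\sqrt{d_u^2+d_v^2}$, where $d_u$ is the degree of $u$ in $G$ (the Sombor index). Define rooted graphs $B_m$ recursively: $B_0$ is a hexagon $C_6$ with a distinguished root vertex; for $m\ge 1$, $B_m$ is obtained from a hexagon with vertices $a_1,\ldots,a_6$ in cyclic order, a new vertex $b$ joined by an edge to $a_4$, and two disjoint copies of $B_{m-1}$ whose roots are each joined by an edge to $b$; the root of $B_m$ is $a_1$. The dendrimer $D_3[n]$ is obtained from three disjoint copies of $B_n$ and a new central vertex $c$ joined by an edge to the root of each copy. *)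

theory Defs
  imports Complex_Main
begin

text \<open>A finite simple graph is represented by its edge set: a set of 2-element sets of vertices.
  Vertices are encoded as lists of naturals (address of the vertex in the recursive construction).\<close>

definition deg :: "'a set set \<Rightarrow> 'a \<Rightarrow> nat" where
  "deg E u = card {e \<in> E. u \<in> e}"

definition sombor :: "'a set set \<Rightarrow> real" where
  "sombor E = (\<Sum>e\<in>E. sqrt (\<Sum>x\<in>e. (real (deg E x))^2))"

text \<open>Hexagon on vertices [0],...,[5] in cyclic order; a_k is [k-1].\<close>
definition hexE :: "nat list set set" where
  "hexE = {{[i], [(i + 1) mod 6]} | i. i < 6}"

text \<open>Rooted graph B_m; its root is always the vertex [0]. In B_(m+1), b = [6] is joined to
  a_4 = [3], and two copies of B_m (vertices prefixed by 7 resp. 8) have their roots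
  [7,0], [8,0] joined to b.\<close>
fun Bm :: "nat \<Rightarrow> nat list set set" where
  "Bm 0 = hexE"
| "Bm (Suc m) = hexE \<union> {{[3], [6]}}
     \<union> (image ((#) 7)) ` Bm m \<union> (image ((#) 8)) ` Bm m
     \<union> {{[6], [7, 0]}, {[6], [8, 0]}}"

definition D3 :: "nat \<Rightarrow> nat list set set" where
  "D3 n = (\<Union>i<3. (image ((#) i)) ` Bm n) \<union> {{[], [i, 0]} | i. i < (3::nat)}"

end

theory Submission imports Defs begin

definition W :: "(nat list \<Rightarrow> nat) \<Rightarrow> nat list set set \<Rightarrow> real" where
  "W D E = (\<Sum>e\<in>E. sqrt (\<Sum>x\<in>e. (real (D x))^2))"

lemma hexE_eq: "hexE = {{[0],[1]},{[1],[2]},{[2],[3]},{[3],[4]},{[4],[5]},{[5],[0]}}"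
proof
  show "hexE \<subseteq> {{[0],[1]},{[1],[2]},{[2],[3]},{[3],[4]},{[4],[5]},{[5],[0]}}"
  proof
    fix x assume "x \<in> hexE"
    then obtain i where i: "i < 6" "x = {[i],[(i+1) mod 6]}" unfolding hexE_def by blast
    then have "i = 0 \<or> i = 1 \<or> i = 2 \<or> i = 3 \<or> i = 4 \<or> i = 5" by arith
    then show "x \<in> {{[0],[1]},{[1],[2]},{[2],[3]},{[3],[4]},{[4],[5]},{[5],[0]}}"
      using i(2) by (elim disjE) (simp_all add: doubleton_eq_iff)
  qed
next
  have m: "{[i],[j]} \<in> hexE" if "i < 6" "j = (i+1) mod 6" for i j
    unfolding hexE_def using that by blast
  show "{{[0],[1]},{[1],[2]},{[2],[3]},{[3],[4]},{[4],[5]},{[5],[0]}} \<subseteq> hexE"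
    by (intro insert_subsetI empty_subsetI; rule m; simp)
qed

lemma inj_cons: "inj ((#) k)" by (auto intro: injI)

lemma inj_img_cons: "inj (image ((#) k))"
  by (rule injI) (simp add: inj_image_eq_iff inj_cons)

lemma W_img: "W D (image ((#) k) ` E) = W (\<lambda>w. D (k#w)) E"
  unfolding W_def
  apply (subst sum.reindex)
   apply (meson inj_img_cons inj_on_subset subset_UNIV)
  apply (rule sum.cong, simp)
  apply (simp add: sum.reindex inj_on_def)
  done

lemma W_Un: "finite A \<Longrightarrow> finite B \<Longrightarrow> A \<inter> B = {} \<Longrightarrow> W D (A \<union> B) = W D A + W D B"
  unfolding W_def by (rule sum.union_disjoint)

lemma deg_Un: "finite A \<Longrightarrow> finite B \<Longrightarrow> A \<inter> B = {} \<Longrightarrow> deg (A \<union> B) v = deg A v + deg B v"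
  unfolding deg_def
  apply (subst card_Un_disjoint[symmetric])
  apply auto
  apply (rule arg_cong[where f=card]) apply auto done

lemma filt_img: "{e \<in> f ` E. P e} = f ` {e \<in> E. P (f e)}" by blast

lemma mem_img_cons: "(k#w \<in> image ((#) k) e) = (w \<in> e)" by blast

lemma deg_img_same: "deg (image ((#) k) ` E) (k#w) = deg E w"
proof -
  have "{e \<in> image ((#) k) ` E. k#w \<in> e} = image ((#) k) ` {e\<in>E. w \<in> e}"
    by (simp only: filt_img mem_img_cons)
  moreover have "card (image ((#) k) ` {e\<in>E. w \<in> e}) = card {e\<in>E. w \<in> e}"
    by (rule card_image) (rule inj_on_subset[OF inj_img_cons subset_UNIV])
  ultimately show ?thesis unfolding deg_def by simp
qed

lemma deg_img_other: assumes "\<forall>w. v \<noteq> k#w" shows "deg (image ((#) k) ` E) v = 0"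
proof -
  have "{e \<in> image ((#) k) ` E. v \<in> e} = {}" using assms by blast
  then show ?thesis unfolding deg_def by (simp only: card.empty)
qed

lemma img_elem: "e \<in> image ((#) k) ` E \<Longrightarrow> x \<in> e \<Longrightarrow> \<exists>w. x = k#w" by auto

lemma Bm_finite: "finite (Bm m)"
  by (induction m) (auto simp: hexE_eq)

lemma Bm_ne: "e \<in> Bm m \<Longrightarrow> e \<noteq> {}"
  by (induction m arbitrary: e) (auto simp: hexE_eq)

definition Hs :: "nat list set set" where
  "Hs = hexE \<union> {{[3], [6]}} \<union> {{[6], [7, 0]}, {[6], [8, 0]}}"

lemma Hs_eq: "Hs = {{[6],[7,0]},{[6],[8,0]},{[3],[6]},{[0],[1]},{[1],[2]},{[2],[3]},{[3],[4]},{[4],[5]},{[5],[0]}}"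
  unfolding Hs_def hexE_eq by simp

lemma Bm_Suc': "Bm (Suc m) = Hs \<union> (image ((#) 7) ` Bm m \<union> image ((#) 8) ` Bm m)"
  unfolding Bm.simps(2) Hs_def by blast

declare Bm.simps(2)[simp del]

lemma img_disj: assumes "k \<noteq> j" "\<forall>e\<in>E. e \<noteq> {}"
  shows "image ((#) k) ` E \<inter> image ((#) (j::nat)) ` F = {}"
proof (rule ccontr)
  assume "image ((#) k) ` E \<inter> image ((#) (j::nat)) ` F \<noteq> {}"
  then obtain e f where "e \<in> E" "f \<in> F" "image ((#) k) e = image ((#) j) f" by auto
  moreover obtain x where "x \<in> e" using assms(2) \<open>e \<in> E\<close> by auto
  ultimately have "k#x \<in> image ((#) j) f" by auto
  then show False using assms(1) by auto
qed

lemma single_notin: "[a] \<in> e \<Longrightarrow> a \<noteq> k \<Longrightarrow> e \<notin> image ((#) (k::nat)) ` E" by auto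

lemma Hs_sub: "e \<in> Hs \<Longrightarrow> [0] \<in> e \<or> [1] \<in> e \<or> [2] \<in> e \<or> [3] \<in> e \<or> [4] \<in> e \<or> [6] \<in> e"
  unfolding Hs_eq by (elim insertE; simp)

lemma Hs_disj: "Hs \<inter> (image ((#) 7) ` Bm m \<union> image ((#) 8) ` Bm m) = {}"
proof -
  have "e \<notin> image ((#) 7) ` Bm m \<union> image ((#) 8) ` Bm m" if "e \<in> Hs" for e
    using Hs_sub[OF that] single_notin[of _ e 7 "Bm m"] single_notin[of _ e 8 "Bm m"] by auto
  then show ?thesis by blast
qed

lemma C78_disj: "image ((#) 7) ` Bm m \<inter> image ((#) 8) ` Bm m = {}"
  by (rule img_disj) (auto dest: Bm_ne)

lemma Hs_finite: "finite Hs" by (simp add: Hs_eq)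

lemma deg_BSuc: "deg (Bm (Suc m)) v = deg Hs v + deg (image ((#) 7) ` Bm m) v + deg (image ((#) 8) ` Bm m) v"
  unfolding Bm_Suc'
  by (simp add: deg_Un Hs_finite Bm_finite Hs_disj C78_disj)

lemma filt_insert: "{e \<in> insert a A. P e} = (if P a then insert a {e \<in> A. P e} else {e \<in> A. P e})"
  by auto

lemma degHs: "deg Hs [0] = 2" "deg Hs [1] = 2" "deg Hs [2] = 2" "deg Hs [3] = 3"
  "deg Hs [4] = 2" "deg Hs [5] = 2" "deg Hs [6] = 3"
  "deg Hs (7#w) = (if w = [0] then 1 else 0)" "deg Hs (8#w) = (if w = [0] then 1 else 0)"
  unfolding deg_def Hs_eq by (simp_all only: filt_insert Set.empty_Collect_eq mem_Collect_eq; simp add: doubleton_eq_iff)+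

lemma deg_B_single: "k \<le> 6 \<Longrightarrow> deg (Bm (Suc m)) [k] = deg Hs [k]"
  unfolding deg_BSuc by (simp add: deg_img_other)

lemma deg_B7: "deg (Bm (Suc m)) (7#w) = deg Hs (7#w) + deg (Bm m) w"
  unfolding deg_BSuc by (simp add: deg_img_other deg_img_same)

lemma deg_B8: "deg (Bm (Suc m)) (8#w) = deg Hs (8#w) + deg (Bm m) w"
  unfolding deg_BSuc by (simp add: deg_img_other deg_img_same)

lemma deg_hex0: "deg hexE [0] = 2" "deg hexE [1] = 2" "deg hexE [2] = 2" "deg hexE [3] = 2"
  "deg hexE [4] = 2" "deg hexE [5] = 2"
  unfolding deg_def hexE_eq by (simp_all only: filt_insert Set.empty_Collect_eq mem_Collect_eq; simp add: doubleton_eq_iff)+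

lemma deg_hex: "k < 6 \<Longrightarrow> deg hexE [k] = 2"
proof -
  assume "k < 6"
  then have "k = 0 \<or> k = 1 \<or> k = 2 \<or> k = 3 \<or> k = 4 \<or> k = 5" by arith
  then show ?thesis using deg_hex0 by (elim disjE) simp_all
qed

lemma deg_B_root: "deg (Bm m) [0] = 2"
proof (cases m)
  case 0
  then show ?thesis using deg_hex0 by (simp only: Bm.simps)
next
  case (Suc k)
  then show ?thesis using deg_B_single[of 0 k] degHs(1) by simp
qed

definition Dm :: "nat \<Rightarrow> nat list \<Rightarrow> nat" where
  "Dm m v = deg (Bm m) v + (if v = [0] then 1 else 0)"

definition T :: "nat \<Rightarrow> real" where "T m = W (Dm m) (Bm m)"

lemma sqrt8: "sqrt 8 = 2 * sqrt 2"
proof -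
  have "sqrt 8 = sqrt (2^2 * 2)" by simp
  also have "... = 2 * sqrt 2" by (simp only: real_sqrt_mult real_sqrt_abs)
  finally show ?thesis .
qed

lemma sqrt18: "sqrt 18 = 3 * sqrt 2"
proof -
  have "sqrt 18 = sqrt (3^2 * 2)" by simp
  also have "... = 3 * sqrt 2" by (simp only: real_sqrt_mult real_sqrt_abs)
  finally show ?thesis .
qed

lemma Dm0: "k < 6 \<Longrightarrow> Dm 0 [k] = (if k = 0 then 3 else 2)"
  unfolding Dm_def using deg_hex[of k] by (simp only: Bm.simps) simp

lemma T0: "T 0 = 8 * sqrt 2 + 2 * sqrt 13"
proof -
  have "T 0 = W (Dm 0) {{[0],[1]},{[1],[2]},{[2],[3]},{[3],[4]},{[4],[5]},{[5],[0]}}"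
    unfolding T_def by (simp only: Bm.simps hexE_eq)
  also have "... = 8 * sqrt 2 + 2 * sqrt 13"
    unfolding W_def by (simp add: doubleton_eq_iff Dm0 sqrt8)
  finally show ?thesis .
qed

lemma Dm_Suc7: "Dm (Suc m) (7#w) = Dm m w"
  unfolding Dm_def by (simp add: deg_B7 degHs)
lemma Dm_Suc8: "Dm (Suc m) (8#w) = Dm m w"
  unfolding Dm_def by (simp add: deg_B8 degHs)

lemma T_Suc: "T (Suc m) = 2 * T m + 13 * sqrt 2 + 4 * sqrt 13"
proof -
  have "T (Suc m) = W (Dm (Suc m)) Hs + W (Dm (Suc m)) (image ((#) 7) ` Bm m) + W (Dm (Suc m)) (image ((#) 8) ` Bm m)"
    unfolding T_def Bm_Suc'[of m]
    by (simp add: W_Un Hs_finite Bm_finite Hs_disj C78_disj)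
  also have "W (Dm (Suc m)) (image ((#) 7) ` Bm m) = T m"
    unfolding W_img T_def Dm_Suc7 ..
  also have "W (Dm (Suc m)) (image ((#) 8) ` Bm m) = T m"
    unfolding W_img T_def Dm_Suc8 ..
  also have "W (Dm (Suc m)) Hs = 13 * sqrt 2 + 4 * sqrt 13"
  proof -
    have d0: "Dm (Suc m) [0] = 3" "Dm (Suc m) [1] = 2" "Dm (Suc m) [2] = 2" "Dm (Suc m) [3] = 3"
      "Dm (Suc m) [4] = 2" "Dm (Suc m) [5] = 2" "Dm (Suc m) [6] = 3" "Dm (Suc m) [7,0] = 3" "Dm (Suc m) [8,0] = 3"
      unfolding Dm_def using degHs deg_B_single[of 0 m] deg_B_single[of 1 m] deg_B_single[of 2 m]
        deg_B_single[of 3 m] deg_B_single[of 4 m] deg_B_single[of 5 m] deg_B_single[of 6 m]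
      by (simp_all add: deg_B7 deg_B8 deg_B_root)
    have d: "k \<le> 6 \<Longrightarrow> Dm (Suc m) [k] = (if k = 0 \<or> k = 3 \<or> k = 6 then 3 else 2)" for k
    proof -
      assume "k \<le> 6"
      then have "k = 0 \<or> k = 1 \<or> k = 2 \<or> k = 3 \<or> k = 4 \<or> k = 5 \<or> k = 6" by arith
      then show ?thesis using d0 by (elim disjE) simp_all
    qed
    show ?thesis unfolding W_def Hs_eq
      by (simp add: doubleton_eq_iff d d0(8,9) sqrt8 sqrt18)
  qed
  finally show ?thesis by simp
qed

lemma T_closed: "T m = (21 * 2^m - 13) * sqrt 2 + (6 * 2^m - 4) * sqrt 13"
  by (induction m) (simp_all add: T0 T_Suc algebra_simps)

definition Ctr :: "nat list set set" where "Ctr = {{[],[0,0]},{[],[1,0]},{[],[2,0]}}"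

lemma lt3: "((i::nat) < 3) = (i = 0 \<or> i = 1 \<or> i = 2)" by arith

lemma lessThan3: "{..<3::nat} = {0,1,2}"
  by (rule set_eqI) (simp only: lessThan_iff insert_iff empty_iff lt3 simp_thms)

lemma Ctr_eq: "{{[], [i, 0]} | i. i < (3::nat)} = Ctr"
proof
  show "{{[], [i, 0]} | i. i < (3::nat)} \<subseteq> Ctr"
  proof
    fix x assume "x \<in> {{[], [i, 0]} | i. i < (3::nat)}"
    then obtain i where i: "x = {[], [i, 0]}" "i < (3::nat)" by blast
    then have "i = 0 \<or> i = 1 \<or> i = 2" by arith
    then show "x \<in> Ctr" using i(1) unfolding Ctr_def by (elim disjE) simp_all
  qed
next
  have m: "i < 3 \<Longrightarrow> {[], [i, 0]} \<in> {{[], [i, 0]} | i. i < (3::nat)}" for i by blast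
  show "Ctr \<subseteq> {{[], [i, 0]} | i. i < (3::nat)}"
    unfolding Ctr_def by (intro insert_subsetI empty_subsetI; rule m; simp)
qed

lemma D3_eq: "D3 n = image ((#) 0) ` Bm n \<union> (image ((#) 1) ` Bm n \<union> (image ((#) 2) ` Bm n \<union> Ctr))"
  unfolding D3_def Ctr_eq lessThan3 by (simp only: UN_insert UN_empty Un_empty_right Un_assoc)

lemma Bne: "\<forall>e\<in>Bm n. e \<noteq> {}" using Bm_ne by blast

lemma nil_notin: "[] \<in> e \<Longrightarrow> e \<notin> image ((#) (k::nat)) ` E" by auto

lemma D3_disj: "image ((#) 0) ` Bm n \<inter> (image ((#) 1) ` Bm n \<union> (image ((#) 2) ` Bm n \<union> Ctr)) = {}"
  "image ((#) 1) ` Bm n \<inter> (image ((#) 2) ` Bm n \<union> Ctr) = {}"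
  "image ((#) 2) ` Bm n \<inter> Ctr = {}"
proof -
  have a: "image ((#) 0) ` Bm n \<inter> image ((#) 1) ` Bm n = {}"
    by (rule img_disj[OF _ Bne]) simp
  have a2: "image ((#) 0) ` Bm n \<inter> image ((#) 2) ` Bm n = {}"
    by (rule img_disj[OF _ Bne]) simp
  have a3: "image ((#) 1) ` Bm n \<inter> image ((#) 2) ` Bm n = {}"
    by (rule img_disj[OF _ Bne]) simp
  have b: "image ((#) (k::nat)) ` Bm n \<inter> Ctr = {}" for k
    by (simp add: Ctr_def nil_notin)
  show "image ((#) 0) ` Bm n \<inter> (image ((#) 1) ` Bm n \<union> (image ((#) 2) ` Bm n \<union> Ctr)) = {}"
    by (simp only: Int_Un_distrib a a2 b Un_empty)
  show "image ((#) 1) ` Bm n \<inter> (image ((#) 2) ` Bm n \<union> Ctr) = {}"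
    by (simp only: Int_Un_distrib a3 b Un_empty)
  show "image ((#) 2) ` Bm n \<inter> Ctr = {}" by (rule b)
qed

lemma D3_fin: "finite (image ((#) (i::nat)) ` Bm n)" "finite Ctr"
  by (simp_all add: Bm_finite Ctr_def)

lemma deg_D3: "deg (D3 n) v = deg (image ((#) 0) ` Bm n) v + deg (image ((#) 1) ` Bm n) v
   + deg (image ((#) 2) ` Bm n) v + deg Ctr v"
proof -
  have f: "finite (image ((#) 1) ` Bm n \<union> (image ((#) 2) ` Bm n \<union> Ctr))" "finite (image ((#) 2) ` Bm n \<union> Ctr)"
    using D3_fin by blast+
  show ?thesis unfolding D3_eq
    using deg_Un[where v=v, OF D3_fin(1) f(1) D3_disj(1)] deg_Un[where v=v, OF D3_fin(1) f(2) D3_disj(2)]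
      deg_Un[where v=v, OF D3_fin(1) D3_fin(2) D3_disj(3)]
    by (simp only: add.assoc)
qed

lemma degCtr0: "deg Ctr [] = 3" "deg Ctr (0#w) = (if w = [0] then 1 else 0)"
   "deg Ctr (1#w) = (if w = [0] then 1 else 0)" "deg Ctr (2#w) = (if w = [0] then 1 else 0)"
  unfolding deg_def Ctr_def by (simp_all only: filt_insert Set.empty_Collect_eq mem_Collect_eq; simp add: doubleton_eq_iff)+

lemma degCtr: "deg Ctr [] = 3" "i < 3 \<Longrightarrow> deg Ctr (i#w) = (if w = [0] then 1 else 0)"
proof -
  show "deg Ctr [] = 3" by (rule degCtr0(1))
  assume "i < 3"
  then have "i = 0 \<or> i = 1 \<or> i = 2" by arith
  then show "deg Ctr (i#w) = (if w = [0] then 1 else 0)" using degCtr0 by (elim disjE) simp_all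
qed

lemma deg_D3_i: "i < 3 \<Longrightarrow> deg (D3 n) (i#w) = Dm n w"
proof -
  assume "i < 3"
  then have "i = 0 \<or> i = 1 \<or> i = 2" by auto
  then show ?thesis unfolding deg_D3 Dm_def using \<open>i < 3\<close>
    by (elim disjE) (simp_all add: deg_img_other deg_img_same degCtr)
qed

lemma deg_D3_nil: "deg (D3 n) [] = 3"
  unfolding deg_D3 by (simp add: deg_img_other degCtr)

theorem mainTheorem12:
  fixes n :: nat
  shows "sombor (D3 n) = (63 * 2 ^ n - 30) * sqrt 2 + (18 * 2 ^ n - 12) * sqrt 13"
proof -
  have "sombor (D3 n) = W (deg (D3 n)) (D3 n)" unfolding sombor_def W_def ..
  also have "... = W (deg (D3 n)) (image ((#) 0) ` Bm n) + (W (deg (D3 n)) (image ((#) 1) ` Bm n)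
     + (W (deg (D3 n)) (image ((#) 2) ` Bm n) + W (deg (D3 n)) Ctr))"
  proof -
    have f: "finite (image ((#) 1) ` Bm n \<union> (image ((#) 2) ` Bm n \<union> Ctr))" "finite (image ((#) 2) ` Bm n \<union> Ctr)"
      using D3_fin by blast+
    show ?thesis
      using W_Un[OF D3_fin(1) f(1) D3_disj(1), of "deg (D3 n)"] W_Un[OF D3_fin(1) f(2) D3_disj(2), of "deg (D3 n)"]
        W_Un[OF D3_fin(1) D3_fin(2) D3_disj(3), of "deg (D3 n)"]
      by (simp only: D3_eq[symmetric])
  qed
  also have "W (deg (D3 n)) (image ((#) 0) ` Bm n) = T n"
    unfolding W_img T_def by (simp add: deg_D3_i)
  also have "W (deg (D3 n)) (image ((#) 1) ` Bm n) = T n"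
    unfolding W_img T_def by (simp add: deg_D3_i)
  also have "W (deg (D3 n)) (image ((#) 2) ` Bm n) = T n"
    unfolding W_img T_def by (simp add: deg_D3_i)
  also have "W (deg (D3 n)) Ctr = 9 * sqrt 2"
  proof -
    have d: "i < 3 \<Longrightarrow> deg (D3 n) [i,0] = 3" for i
      by (simp add: deg_D3_i Dm_def deg_B_root)
    show ?thesis unfolding W_def Ctr_def by (simp add: d deg_D3_nil sqrt18 doubleton_eq_iff)
  qed
  finally show ?thesis by (simp add: T_closed algebra_simps)
qed

end
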